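(* Let $A\overset{i}{\to}U\overset{j}{\to}G$ be an extension of a semilattice of groups $A$ by a group $G$. Then there exist an inverse semigroup $S$ and epimorphisms $\pi:U\to S$, $\kappa:S\to G$ such that (i) $A\overset{i}{\to}U\overset{\pi}{\to}S$ is an extension of $A$ by $S$, and (ii) $j=\kappa\circ\pi$. Moreover, whenever $S,\pi,\kappa$ satisfy (i) and (ii), then (iii) $S$ is $E$-unitary and (iv) $\ker\kappa=\sigma$ (the minimum group congruence on $S$).
   Context: A semilattice of groups is an inverse semigroup whose idempotents are central. An extension of $A$ by a group $G$ is an inverse semigroup $U$ with a monomorphism $i:A\to U$ and an epimorphism $j:U\to G$ with $i(A)=j^{-1}(1)$. An extension of $A$ by an inverse semigroup $S$ is an inverse semigroup $U$ with a monomorphism $i:A\to U$ and an idempotent-separating epimorphism $\pi:U\to S$ with $i(A)=\pi^{-1}(E(S))$. For an inverse semigroup $S$, $\sigma$ is given by $(s,t)\in\sigma$ iff $es=et$ for some $e\in E(S)$; $S$ is $E$-unitary if $e\le s$ with $e\in E(S)$ implies $s\in E(S)$; $\ker\kappa=\{(s,t):\kappa(s)=\kappa(t)\}$. *)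

theory Defs
  imports "HOL-Algebra.Group"
begin

text \<open>Inverse semigroups are represented by HOL-Algebra monoid records whose
  unit field is ignored; only carrier and multiplication are used.\<close>

definition semigroup_on :: "('a, 'b) monoid_scheme \<Rightarrow> bool" where
  "semigroup_on S \<longleftrightarrow>
     (\<forall>x\<in>carrier S. \<forall>y\<in>carrier S. x \<otimes>\<^bsub>S\<^esub> y \<in> carrier S) \<and>
     (\<forall>x\<in>carrier S. \<forall>y\<in>carrier S. \<forall>z\<in>carrier S.
        x \<otimes>\<^bsub>S\<^esub> y \<otimes>\<^bsub>S\<^esub> z = x \<otimes>\<^bsub>S\<^esub> (y \<otimes>\<^bsub>S\<^esub> z))"

definition inverse_semigroup :: "('a, 'b) monoid_scheme \<Rightarrow> bool" where
  "inverse_semigroup S \<longleftrightarrow> semigroup_on S \<and>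
     (\<forall>a\<in>carrier S. \<exists>!b. b \<in> carrier S \<and>
        a \<otimes>\<^bsub>S\<^esub> b \<otimes>\<^bsub>S\<^esub> a = a \<and> b \<otimes>\<^bsub>S\<^esub> a \<otimes>\<^bsub>S\<^esub> b = b)"

definition idems :: "('a, 'b) monoid_scheme \<Rightarrow> 'a set" where
  "idems S = {e \<in> carrier S. e \<otimes>\<^bsub>S\<^esub> e = e}"

definition semilattice_of_groups :: "('a, 'b) monoid_scheme \<Rightarrow> bool" where
  "semilattice_of_groups A \<longleftrightarrow> inverse_semigroup A \<and>
     (\<forall>e\<in>idems A. \<forall>x\<in>carrier A. e \<otimes>\<^bsub>A\<^esub> x = x \<otimes>\<^bsub>A\<^esub> e)"

definition group_extension ::
  "('a, 'm) monoid_scheme \<Rightarrow> ('u, 'n) monoid_scheme \<Rightarrow> ('g, 'k) monoid_scheme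
   \<Rightarrow> ('a \<Rightarrow> 'u) \<Rightarrow> ('u \<Rightarrow> 'g) \<Rightarrow> bool" where
  "group_extension A U G i j \<longleftrightarrow> inverse_semigroup A \<and> inverse_semigroup U \<and> group G \<and>
     i \<in> mon A U \<and> j \<in> epi U G \<and>
     i ` carrier A = {u \<in> carrier U. j u = \<one>\<^bsub>G\<^esub>}"

definition idempotent_separating ::
  "('u, 'n) monoid_scheme \<Rightarrow> ('u \<Rightarrow> 's) \<Rightarrow> bool" where
  "idempotent_separating U p \<longleftrightarrow>
     (\<forall>e\<in>idems U. \<forall>f\<in>idems U. p e = p f \<longrightarrow> e = f)"

definition is_extension ::
  "('a, 'm) monoid_scheme \<Rightarrow> ('u, 'n) monoid_scheme \<Rightarrow> ('s, 'k) monoid_scheme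
   \<Rightarrow> ('a \<Rightarrow> 'u) \<Rightarrow> ('u \<Rightarrow> 's) \<Rightarrow> bool" where
  "is_extension A U S i p \<longleftrightarrow> inverse_semigroup A \<and> inverse_semigroup U \<and> inverse_semigroup S \<and>
     i \<in> mon A U \<and> p \<in> epi U S \<and> idempotent_separating U p \<and>
     i ` carrier A = {u \<in> carrier U. p u \<in> idems S}"

definition nat_le :: "('a, 'b) monoid_scheme \<Rightarrow> 'a \<Rightarrow> 'a \<Rightarrow> bool" where
  "nat_le S s t \<longleftrightarrow> s \<in> carrier S \<and> t \<in> carrier S \<and>
     (\<exists>e\<in>idems S. s = e \<otimes>\<^bsub>S\<^esub> t)"

definition E_unitary :: "('a, 'b) monoid_scheme \<Rightarrow> bool" where
  "E_unitary S \<longleftrightarrow> (\<forall>e\<in>idems S. \<forall>s\<in>carrier S. nat_le S e s \<longrightarrow> s \<in> idems S)"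

definition sigma_rel :: "('a, 'b) monoid_scheme \<Rightarrow> ('a \<times> 'a) set" where
  "sigma_rel S = {(s, t). s \<in> carrier S \<and> t \<in> carrier S \<and>
     (\<exists>e\<in>idems S. e \<otimes>\<^bsub>S\<^esub> s = e \<otimes>\<^bsub>S\<^esub> t)}"

definition ker_rel :: "('s, 'b) monoid_scheme \<Rightarrow> ('s \<Rightarrow> 'g) \<Rightarrow> ('s \<times> 's) set" where
  "ker_rel S k = {(s, t). s \<in> carrier S \<and> t \<in> carrier S \<and> k s = k t}"

end

theory Submission
  imports Defs
begin


locale invsg = fixes S (structure) assumes isg: "inverse_semigroup S"
begin

lemma closed[intro,simp]: "x \<in> carrier S \<Longrightarrow> y \<in> carrier S \<Longrightarrow> x \<otimes> y \<in> carrier S"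
  using isg unfolding inverse_semigroup_def semigroup_on_def by blast

lemma assoc: "x \<in> carrier S \<Longrightarrow> y \<in> carrier S \<Longrightarrow> z \<in> carrier S \<Longrightarrow> x \<otimes> y \<otimes> z = x \<otimes> (y \<otimes> z)"
  using isg unfolding inverse_semigroup_def semigroup_on_def by blast

definition iv where "iv a = (THE b. b \<in> carrier S \<and> a \<otimes> b \<otimes> a = a \<and> b \<otimes> a \<otimes> b = b)"

lemma iv: assumes "a \<in> carrier S"
  shows "iv a \<in> carrier S" "a \<otimes> iv a \<otimes> a = a" "iv a \<otimes> a \<otimes> iv a = iv a"
proof -
  have "\<exists>!b. b \<in> carrier S \<and> a \<otimes> b \<otimes> a = a \<and> b \<otimes> a \<otimes> b = b"
    using isg assms unfolding inverse_semigroup_def by blast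
  from theI'[OF this] show "iv a \<in> carrier S" "a \<otimes> iv a \<otimes> a = a" "iv a \<otimes> a \<otimes> iv a = iv a"
    unfolding iv_def by auto
qed

lemma iv_unique: assumes "a \<in> carrier S" "b \<in> carrier S" "a \<otimes> b \<otimes> a = a" "b \<otimes> a \<otimes> b = b"
  shows "b = iv a"
proof -
  have "\<exists>!b. b \<in> carrier S \<and> a \<otimes> b \<otimes> a = a \<and> b \<otimes> a \<otimes> b = b"
    using isg assms unfolding inverse_semigroup_def by blast
  then show ?thesis using iv[OF assms(1)] assms by blast
qed

lemma idem_iv: "e \<in> idems S \<Longrightarrow> iv e = e"
  by (rule iv_unique[symmetric]) (auto simp: idems_def)

lemma idem_comm: assumes e: "e \<in> idems S" and f: "f \<in> idems S" shows "e \<otimes> f = f \<otimes> e"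
proof -
  have ec: "e \<in> carrier S" "e \<otimes> e = e" and fc: "f \<in> carrier S" "f \<otimes> f = f" using e f by (auto simp: idems_def)
  have gen: "x \<otimes> y \<in> idems S" if xc: "x \<in> carrier S" "x \<otimes> x = x" and yc: "y \<in> carrier S" "y \<otimes> y = y" for x y
  proof -
    define z where "z = iv (x \<otimes> y)"
    have zc: "z \<in> carrier S" and z1: "x \<otimes> y \<otimes> z \<otimes> (x \<otimes> y) = x \<otimes> y" and z2: "z \<otimes> (x \<otimes> y) \<otimes> z = z"
      using iv[of "x \<otimes> y"] xc yc unfolding z_def by auto
    define w where "w = y \<otimes> z \<otimes> x"
    have wc: "w \<in> carrier S" using xc yc zc w_def by auto
    have xx: "\<And>r. r \<in> carrier S \<Longrightarrow> x \<otimes> (x \<otimes> r) = x \<otimes> r" using xc by (metis assoc)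
    have yy: "\<And>r. r \<in> carrier S \<Longrightarrow> y \<otimes> (y \<otimes> r) = y \<otimes> r" using yc by (metis assoc)
    have "x \<otimes> y \<otimes> w \<otimes> (x \<otimes> y) = x \<otimes> y \<otimes> z \<otimes> (x \<otimes> y)"
      using xc yc zc by (simp add: w_def assoc xx yy)
    also have "\<dots> = x \<otimes> y" using xc yc zc z1 by (simp add: assoc)
    finally have w1: "x \<otimes> y \<otimes> w \<otimes> (x \<otimes> y) = x \<otimes> y" .
    have "w \<otimes> (x \<otimes> y) \<otimes> w = y \<otimes> (z \<otimes> (x \<otimes> y) \<otimes> z) \<otimes> x"
      using xc yc zc by (simp add: w_def assoc xx yy)
    also have "\<dots> = y \<otimes> z \<otimes> x" using z2 by simp
    also have "\<dots> = w" by (simp add: w_def)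
    finally have w2: "w \<otimes> (x \<otimes> y) \<otimes> w = w" .
    have zw: "z = w" unfolding z_def using iv_unique[OF _ wc w1 w2] xc yc by simp
    have "z \<otimes> z = w \<otimes> w" using zw by simp
    also have "\<dots> = y \<otimes> (z \<otimes> (x \<otimes> y) \<otimes> z) \<otimes> x"
      using xc yc zc by (simp add: w_def assoc)
    also have "\<dots> = y \<otimes> z \<otimes> x" using z2 by simp
    also have "\<dots> = z" using zw w_def by simp
    finally have zz: "z \<otimes> z = z" .
    have "x \<otimes> y = iv z"
      by (rule iv_unique) (use z1 z2 zc xc yc in \<open>auto simp: assoc\<close>)
    also have "\<dots> = z" using zz zc by (intro idem_iv) (auto simp: idems_def)
    finally show ?thesis using zc zz by (auto simp: idems_def)
  qed
  have ef: "e \<otimes> f \<in> idems S" and fe: "f \<otimes> e \<in> idems S" using gen ec fc by auto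
  have ee: "\<And>r. r \<in> carrier S \<Longrightarrow> e \<otimes> (e \<otimes> r) = e \<otimes> r" using ec by (metis assoc)
  have ff: "\<And>r. r \<in> carrier S \<Longrightarrow> f \<otimes> (f \<otimes> r) = f \<otimes> r" using fc by (metis assoc)
  have "f \<otimes> e = iv (e \<otimes> f)"
  proof (rule iv_unique)
    have "e \<otimes> f \<otimes> (f \<otimes> e) \<otimes> (e \<otimes> f) = (e \<otimes> f) \<otimes> (e \<otimes> f)" using ec fc by (simp add: assoc ee ff)
    also have "\<dots> = e \<otimes> f" using ef by (simp add: idems_def)
    finally show "e \<otimes> f \<otimes> (f \<otimes> e) \<otimes> (e \<otimes> f) = e \<otimes> f" .
    have "f \<otimes> e \<otimes> (e \<otimes> f) \<otimes> (f \<otimes> e) = (f \<otimes> e) \<otimes> (f \<otimes> e)" using ec fc by (simp add: assoc ee ff)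
    also have "\<dots> = f \<otimes> e" using fe by (simp add: idems_def)
    finally show "f \<otimes> e \<otimes> (e \<otimes> f) \<otimes> (f \<otimes> e) = f \<otimes> e" .
  qed (use ec fc in auto)
  also have "\<dots> = e \<otimes> f" using ef by (rule idem_iv)
  finally show ?thesis by simp
qed

lemma iv_c[simp,intro]: "a \<in> carrier S \<Longrightarrow> iv a \<in> carrier S" using iv by blast

lemma aiv_idem: "a \<in> carrier S \<Longrightarrow> a \<otimes> iv a \<in> idems S"
  using iv[of a] by (auto simp: idems_def assoc)

lemma iva_idem: "a \<in> carrier S \<Longrightarrow> iv a \<otimes> a \<in> idems S"
  using iv[of a] by (auto simp: idems_def assoc)

lemma iv_iv: "a \<in> carrier S \<Longrightarrow> iv (iv a) = a"
  using iv[of a] by (intro iv_unique[symmetric]) (auto simp: assoc)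

lemma iv_mult: assumes a: "a \<in> carrier S" and b: "b \<in> carrier S"
  shows "iv (a \<otimes> b) = iv b \<otimes> iv a"
proof (rule iv_unique[symmetric])
  have c: "(b \<otimes> iv b) \<otimes> (iv a \<otimes> a) = (iv a \<otimes> a) \<otimes> (b \<otimes> iv b)"
    using idem_comm aiv_idem iva_idem a b by blast
  have "a \<otimes> b \<otimes> (iv b \<otimes> iv a) \<otimes> (a \<otimes> b) = a \<otimes> ((b \<otimes> iv b) \<otimes> (iv a \<otimes> a)) \<otimes> b"
    using a b by (simp add: assoc)
  also have "\<dots> = a \<otimes> iv a \<otimes> a \<otimes> (b \<otimes> iv b \<otimes> b)" using a b c by (simp add: assoc)
  also have "\<dots> = a \<otimes> b" using iv a b by simp
  finally show "a \<otimes> b \<otimes> (iv b \<otimes> iv a) \<otimes> (a \<otimes> b) = a \<otimes> b" .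
  have "iv b \<otimes> iv a \<otimes> (a \<otimes> b) \<otimes> (iv b \<otimes> iv a) = iv b \<otimes> ((iv a \<otimes> a) \<otimes> (b \<otimes> iv b)) \<otimes> iv a"
    using a b by (simp add: assoc)
  also have "\<dots> = iv b \<otimes> ((b \<otimes> iv b) \<otimes> (iv a \<otimes> a)) \<otimes> iv a" by (simp only: c)
  also have "\<dots> = (iv b \<otimes> b \<otimes> iv b) \<otimes> (iv a \<otimes> a \<otimes> iv a)" using a b by (simp add: assoc)
  also have "\<dots> = iv b \<otimes> iv a" using iv a b by simp
  finally show "iv b \<otimes> iv a \<otimes> (a \<otimes> b) \<otimes> (iv b \<otimes> iv a) = iv b \<otimes> iv a" .
qed (use a b in auto)

end

lemma inverse_semigroupI:
  fixes S (structure)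
  assumes sg: "semigroup_on S"
    and reg: "\<And>a. a \<in> carrier S \<Longrightarrow> \<exists>b\<in>carrier S. a \<otimes> b \<otimes> a = a \<and> b \<otimes> a \<otimes> b = b"
    and com: "\<And>e f. e \<in> idems S \<Longrightarrow> f \<in> idems S \<Longrightarrow> e \<otimes> f = f \<otimes> e"
  shows "inverse_semigroup S"
proof -
  have cl: "\<And>x y. x \<in> carrier S \<Longrightarrow> y \<in> carrier S \<Longrightarrow> x \<otimes> y \<in> carrier S"
   and as: "\<And>x y z. x \<in> carrier S \<Longrightarrow> y \<in> carrier S \<Longrightarrow> z \<in> carrier S \<Longrightarrow> x \<otimes> y \<otimes> z = x \<otimes> (y \<otimes> z)"
    using sg unfolding semigroup_on_def by blast+
  have uniq: "b = c" if a: "a \<in> carrier S" and b: "b \<in> carrier S" and c: "c \<in> carrier S"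
    and b1: "a \<otimes> b \<otimes> a = a" and b2: "b \<otimes> a \<otimes> b = b" and c1: "a \<otimes> c \<otimes> a = a" and c2: "c \<otimes> a \<otimes> c = c" for a b c
  proof -
    have ab: "a \<otimes> b \<in> idems S" using a b b1 cl as by (auto simp: idems_def) (metis as)
    have ba: "b \<otimes> a \<in> idems S" using a b b2 cl as by (auto simp: idems_def) (metis as)
    have ac: "a \<otimes> c \<in> idems S" using a c c1 cl as by (auto simp: idems_def) (metis as)
    have ca: "c \<otimes> a \<in> idems S" using a c c2 cl as by (auto simp: idems_def) (metis as)
    have "b = b \<otimes> (a \<otimes> c \<otimes> a) \<otimes> b" using c1 b2 by simp
    also have "\<dots> = (b \<otimes> a) \<otimes> (c \<otimes> a) \<otimes> b" using a b c cl as by simp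
    also have "\<dots> = (c \<otimes> a) \<otimes> (b \<otimes> a) \<otimes> b" using com[OF ba ca] by simp
    also have "\<dots> = c \<otimes> a \<otimes> b" using a b c cl as b2 by simp
    finally have 1: "b = c \<otimes> a \<otimes> b" .
    have "c = c \<otimes> (a \<otimes> b \<otimes> a) \<otimes> c" using b1 c2 by simp
    also have "\<dots> = c \<otimes> ((a \<otimes> b) \<otimes> (a \<otimes> c))" using a b c cl as by simp
    also have "\<dots> = c \<otimes> ((a \<otimes> c) \<otimes> (a \<otimes> b))" using com[OF ab ac] by simp
    also have "\<dots> = (c \<otimes> a \<otimes> c) \<otimes> a \<otimes> b" using a b c cl as by simp
    also have "\<dots> = c \<otimes> a \<otimes> b" using c2 by simp
    finally show ?thesis using 1 by simp
  qed
  show ?thesis unfolding inverse_semigroup_def using sg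
    by (metis reg uniq)
qed



locale ext =
  fixes A :: "'a monoid" and U :: "'u monoid" and G :: "'g monoid"
    and i :: "'a \<Rightarrow> 'u" and j :: "'u \<Rightarrow> 'g"
  assumes slg: "semilattice_of_groups A"
    and gext: "group_extension A U G i j"
begin

lemma isA: "inverse_semigroup A" and isU: "inverse_semigroup U" and grp: "group G"
  and imon: "i \<in> mon A U" and jepi: "j \<in> epi U G"
  and kerN: "i ` carrier A = {u \<in> carrier U. j u = \<one>\<^bsub>G\<^esub>}"
  using gext unfolding group_extension_def by auto

sublocale U: invsg U using isU by unfold_locales
sublocale G: group G using grp .

lemma jc[simp,intro]: "u \<in> carrier U \<Longrightarrow> j u \<in> carrier G"
  using jepi unfolding epi_def hom_def by auto
lemma jm[simp]: "u \<in> carrier U \<Longrightarrow> v \<in> carrier U \<Longrightarrow> j (u \<otimes>\<^bsub>U\<^esub> v) = j u \<otimes>\<^bsub>G\<^esub> j v"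
  using jepi unfolding epi_def hom_def by auto
lemma jsurj: "j ` carrier U = carrier G"
  using jepi unfolding epi_def by auto

lemma jiv[simp]: assumes u: "u \<in> carrier U" shows "j (U.iv u) = inv\<^bsub>G\<^esub> (j u)"
proof -
  have "j u \<otimes>\<^bsub>G\<^esub> j (U.iv u) \<otimes>\<^bsub>G\<^esub> j u = j u"
    using U.iv[OF u] u by (metis U.iv_c jm U.closed)
  then have "j u \<otimes>\<^bsub>G\<^esub> (j (U.iv u) \<otimes>\<^bsub>G\<^esub> j u) = j u" using u by (simp add: G.m_assoc)
  then have "j (U.iv u) \<otimes>\<^bsub>G\<^esub> j u = \<one>\<^bsub>G\<^esub>" using u by simp
  then show ?thesis using u by (metis G.inv_equality jc U.iv_c)
qed

lemma jidem: assumes e: "e \<in> idems U" shows "j e = \<one>\<^bsub>G\<^esub>"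
proof -
  have ec: "e \<in> carrier U" "e \<otimes>\<^bsub>U\<^esub> e = e" using e by (auto simp: idems_def)
  then have "j e \<otimes>\<^bsub>G\<^esub> j e = j e" by (metis jm)
  then show ?thesis using ec by simp
qed

lemma Ncomm: assumes e: "e \<in> idems U" and a: "a \<in> carrier U" and ja: "j a = \<one>\<^bsub>G\<^esub>"
  shows "e \<otimes>\<^bsub>U\<^esub> a = a \<otimes>\<^bsub>U\<^esub> e"
proof -
  have ec: "e \<in> carrier U" "e \<otimes>\<^bsub>U\<^esub> e = e" using e by (auto simp: idems_def)
  have ih: "\<And>x y. x \<in> carrier A \<Longrightarrow> y \<in> carrier A \<Longrightarrow> i (x \<otimes>\<^bsub>A\<^esub> y) = i x \<otimes>\<^bsub>U\<^esub> i y"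
    and inj: "inj_on i (carrier A)"
    using imon unfolding mon_def hom_def by auto
  have Acl: "\<And>x y. x \<in> carrier A \<Longrightarrow> y \<in> carrier A \<Longrightarrow> x \<otimes>\<^bsub>A\<^esub> y \<in> carrier A"
    using isA unfolding inverse_semigroup_def semigroup_on_def by blast
  obtain x where x: "x \<in> carrier A" "e = i x" using kerN jidem[OF e] ec by auto
  obtain y where y: "y \<in> carrier A" "a = i y" using kerN ja a by auto
  have "i (x \<otimes>\<^bsub>A\<^esub> x) = i x" using ih x ec by simp
  then have "x \<otimes>\<^bsub>A\<^esub> x = x" using inj x Acl by (meson inj_onD)
  then have "x \<in> idems A" using x by (auto simp: idems_def)
  then have "x \<otimes>\<^bsub>A\<^esub> y = y \<otimes>\<^bsub>A\<^esub> x" using slg y unfolding semilattice_of_groups_def by blast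
  then show ?thesis using ih x y by metis
qed

definition rho where "rho u v \<longleftrightarrow> u \<in> carrier U \<and> v \<in> carrier U \<and> j u = j v \<and>
   u \<otimes>\<^bsub>U\<^esub> U.iv u = v \<otimes>\<^bsub>U\<^esub> U.iv v"

lemma rho_refl: "u \<in> carrier U \<Longrightarrow> rho u u" by (simp add: rho_def)
lemma rho_sym: "rho u v \<Longrightarrow> rho v u" by (auto simp: rho_def)
lemma rho_trans: "rho u v \<Longrightarrow> rho v w \<Longrightarrow> rho u w" by (auto simp: rho_def)

lemma rho_left: assumes r: "rho u v" and w: "w \<in> carrier U"
  shows "rho (w \<otimes>\<^bsub>U\<^esub> u) (w \<otimes>\<^bsub>U\<^esub> v)"
proof -
  have u: "u \<in> carrier U" and v: "v \<in> carrier U" and juv: "j u = j v"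
    and e: "u \<otimes>\<^bsub>U\<^esub> U.iv u = v \<otimes>\<^bsub>U\<^esub> U.iv v" using r by (auto simp: rho_def)
  have "w \<otimes>\<^bsub>U\<^esub> u \<otimes>\<^bsub>U\<^esub> U.iv (w \<otimes>\<^bsub>U\<^esub> u) = w \<otimes>\<^bsub>U\<^esub> (u \<otimes>\<^bsub>U\<^esub> U.iv u) \<otimes>\<^bsub>U\<^esub> U.iv w"
    using u w by (simp add: U.iv_mult U.assoc)
  also have "\<dots> = w \<otimes>\<^bsub>U\<^esub> (v \<otimes>\<^bsub>U\<^esub> U.iv v) \<otimes>\<^bsub>U\<^esub> U.iv w" using e by simp
  also have "\<dots> = w \<otimes>\<^bsub>U\<^esub> v \<otimes>\<^bsub>U\<^esub> U.iv (w \<otimes>\<^bsub>U\<^esub> v)"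
    using v w by (simp add: U.iv_mult U.assoc)
  finally show ?thesis using u v w juv by (simp add: rho_def)
qed

lemma rho_right: assumes r: "rho u v" and w: "w \<in> carrier U"
  shows "rho (u \<otimes>\<^bsub>U\<^esub> w) (v \<otimes>\<^bsub>U\<^esub> w)"
proof -
  have u: "u \<in> carrier U" and v: "v \<in> carrier U" and juv: "j u = j v"
    and e: "u \<otimes>\<^bsub>U\<^esub> U.iv u = v \<otimes>\<^bsub>U\<^esub> U.iv v" using r by (auto simp: rho_def)
  define g where "g = w \<otimes>\<^bsub>U\<^esub> U.iv w"
  have g: "g \<in> idems U" using U.aiv_idem[OF w] g_def by simp
  have gc: "g \<in> carrier U" using g by (simp add: idems_def)
  define a where "a = U.iv u \<otimes>\<^bsub>U\<^esub> v"
  have ac: "a \<in> carrier U" using u v a_def by simp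
  have ja: "j a = \<one>\<^bsub>G\<^esub>" using u v juv a_def by simp
  have ga: "g \<otimes>\<^bsub>U\<^esub> a = a \<otimes>\<^bsub>U\<^esub> g" using Ncomm[OF g ac ja] .
  have "v = v \<otimes>\<^bsub>U\<^esub> U.iv v \<otimes>\<^bsub>U\<^esub> v" using U.iv[OF v] by simp
  also have "\<dots> = u \<otimes>\<^bsub>U\<^esub> U.iv u \<otimes>\<^bsub>U\<^esub> v" using e by simp
  also have "\<dots> = u \<otimes>\<^bsub>U\<^esub> a" using u v a_def by (simp add: U.assoc)
  finally have vua: "v = u \<otimes>\<^bsub>U\<^esub> a" .
  have ivv: "U.iv v = U.iv a \<otimes>\<^bsub>U\<^esub> U.iv u" using vua U.iv_mult u ac by simp
  have "a \<otimes>\<^bsub>U\<^esub> U.iv a = U.iv u \<otimes>\<^bsub>U\<^esub> (v \<otimes>\<^bsub>U\<^esub> U.iv v) \<otimes>\<^bsub>U\<^esub> u"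
    using u v a_def by (simp add: U.iv_mult U.iv_iv U.assoc)
  also have "\<dots> = U.iv u \<otimes>\<^bsub>U\<^esub> u \<otimes>\<^bsub>U\<^esub> U.iv u \<otimes>\<^bsub>U\<^esub> u" using e u by (simp add: U.assoc)
  also have "\<dots> = U.iv u \<otimes>\<^bsub>U\<^esub> u" using U.iv[OF u] u by simp
  finally have aa: "a \<otimes>\<^bsub>U\<^esub> U.iv a = U.iv u \<otimes>\<^bsub>U\<^esub> u" .
  have "v \<otimes>\<^bsub>U\<^esub> w \<otimes>\<^bsub>U\<^esub> U.iv (v \<otimes>\<^bsub>U\<^esub> w) = v \<otimes>\<^bsub>U\<^esub> g \<otimes>\<^bsub>U\<^esub> U.iv v"
    using v w by (simp add: U.iv_mult U.assoc g_def)
  also have "\<dots> = u \<otimes>\<^bsub>U\<^esub> (a \<otimes>\<^bsub>U\<^esub> g) \<otimes>\<^bsub>U\<^esub> U.iv a \<otimes>\<^bsub>U\<^esub> U.iv u"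
    using vua ivv u ac gc by (simp add: U.assoc)
  also have "\<dots> = u \<otimes>\<^bsub>U\<^esub> (g \<otimes>\<^bsub>U\<^esub> a) \<otimes>\<^bsub>U\<^esub> U.iv a \<otimes>\<^bsub>U\<^esub> U.iv u" using ga by simp
  also have "\<dots> = u \<otimes>\<^bsub>U\<^esub> g \<otimes>\<^bsub>U\<^esub> (a \<otimes>\<^bsub>U\<^esub> U.iv a) \<otimes>\<^bsub>U\<^esub> U.iv u"
    using u ac gc by (simp add: U.assoc)
  also have "\<dots> = u \<otimes>\<^bsub>U\<^esub> g \<otimes>\<^bsub>U\<^esub> (U.iv u \<otimes>\<^bsub>U\<^esub> u \<otimes>\<^bsub>U\<^esub> U.iv u)"
    using aa u gc by (simp add: U.assoc)
  also have "\<dots> = u \<otimes>\<^bsub>U\<^esub> g \<otimes>\<^bsub>U\<^esub> U.iv u" using U.iv[OF u] by simp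
  also have "\<dots> = u \<otimes>\<^bsub>U\<^esub> w \<otimes>\<^bsub>U\<^esub> U.iv (u \<otimes>\<^bsub>U\<^esub> w)"
    using u w by (simp add: U.iv_mult U.assoc g_def)
  finally show ?thesis using u v w juv by (simp add: rho_def)
qed


definition cls where "cls u = {v. rho u v}"
definition rep :: "'u set \<Rightarrow> 'u" where "rep X = (SOME x. x \<in> X)"
definition S0 :: "'u set monoid" where
  "S0 = \<lparr>carrier = cls ` carrier U, mult = (\<lambda>X Y. cls (rep X \<otimes>\<^bsub>U\<^esub> rep Y)), one = {}\<rparr>"
definition kap where "kap X = j (rep X)"

lemma cls_eq: "u \<in> carrier U \<Longrightarrow> v \<in> carrier U \<Longrightarrow> cls u = cls v \<longleftrightarrow> rho u v"
proof
  assume u: "u \<in> carrier U" and v: "v \<in> carrier U" and e: "cls u = cls v"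
  have "v \<in> cls v" using v rho_refl by (simp add: cls_def)
  then have "v \<in> cls u" using e by simp
  then show "rho u v" by (simp add: cls_def)
next
  assume "rho u v"
  then show "cls u = cls v" unfolding cls_def using rho_sym rho_trans by blast
qed

lemma rep_cls: "u \<in> carrier U \<Longrightarrow> rho u (rep (cls u))"
proof -
  assume u: "u \<in> carrier U"
  have "u \<in> cls u" using u rho_refl by (simp add: cls_def)
  then have "rep (cls u) \<in> cls u" unfolding rep_def by (rule someI)
  then show ?thesis by (simp add: cls_def)
qed

lemma rep_c: "u \<in> carrier U \<Longrightarrow> rep (cls u) \<in> carrier U"
  using rep_cls rho_def by blast

lemma rho_mult: "rho u u' \<Longrightarrow> rho v v' \<Longrightarrow> rho (u \<otimes>\<^bsub>U\<^esub> v) (u' \<otimes>\<^bsub>U\<^esub> v')"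
  by (meson rho_def rho_left rho_right rho_trans)

lemma S0_carrier: "carrier S0 = cls ` carrier U" by (simp add: S0_def)

lemma S0_mult: "u \<in> carrier U \<Longrightarrow> v \<in> carrier U \<Longrightarrow> cls u \<otimes>\<^bsub>S0\<^esub> cls v = cls (u \<otimes>\<^bsub>U\<^esub> v)"
proof -
  assume u: "u \<in> carrier U" and v: "v \<in> carrier U"
  have "rho (u \<otimes>\<^bsub>U\<^esub> v) (rep (cls u) \<otimes>\<^bsub>U\<^esub> rep (cls v))"
    using rho_mult rep_cls u v by blast
  then have "cls (rep (cls u) \<otimes>\<^bsub>U\<^esub> rep (cls v)) = cls (u \<otimes>\<^bsub>U\<^esub> v)"
    using cls_eq rho_sym rho_def by metis
  then show ?thesis by (simp add: S0_def)
qed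

lemma kap_cls: "u \<in> carrier U \<Longrightarrow> kap (cls u) = j u"
  unfolding kap_def using rep_cls[unfolded rho_def] by simp

lemma cls_c: "u \<in> carrier U \<Longrightarrow> cls u \<in> carrier S0" by (simp add: S0_carrier)

lemma idem_iff: assumes u: "u \<in> carrier U" shows "cls u \<in> idems S0 \<longleftrightarrow> j u = \<one>\<^bsub>G\<^esub>"
proof
  assume "cls u \<in> idems S0"
  then have "cls (u \<otimes>\<^bsub>U\<^esub> u) = cls u" using S0_mult u by (simp add: idems_def)
  then have "j (u \<otimes>\<^bsub>U\<^esub> u) = j u" using u cls_eq rho_def by (metis U.closed)
  then show "j u = \<one>\<^bsub>G\<^esub>" using u by simp
next
  assume ju: "j u = \<one>\<^bsub>G\<^esub>"
  have e: "u \<otimes>\<^bsub>U\<^esub> U.iv u \<in> idems U" using U.aiv_idem u by simp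
  have c: "u \<otimes>\<^bsub>U\<^esub> U.iv u \<otimes>\<^bsub>U\<^esub> u = u \<otimes>\<^bsub>U\<^esub> (u \<otimes>\<^bsub>U\<^esub> U.iv u)"
    using Ncomm[OF e u ju] U.assoc u by simp
  have "u \<otimes>\<^bsub>U\<^esub> u \<otimes>\<^bsub>U\<^esub> U.iv (u \<otimes>\<^bsub>U\<^esub> u) = u \<otimes>\<^bsub>U\<^esub> (u \<otimes>\<^bsub>U\<^esub> U.iv u) \<otimes>\<^bsub>U\<^esub> U.iv u"
    using u by (simp add: U.iv_mult U.assoc)
  also have "\<dots> = u \<otimes>\<^bsub>U\<^esub> U.iv u \<otimes>\<^bsub>U\<^esub> u \<otimes>\<^bsub>U\<^esub> U.iv u" using c by simp
  also have "\<dots> = u \<otimes>\<^bsub>U\<^esub> U.iv u" using U.iv[OF u] by simp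
  finally have "rho (u \<otimes>\<^bsub>U\<^esub> u) u" using u ju by (simp add: rho_def)
  then show "cls u \<in> idems S0" using u S0_mult cls_eq cls_c by (auto simp: idems_def)
qed

lemma idem_rep: assumes u: "u \<in> carrier U" and X: "cls u \<in> idems S0"
  shows "cls u = cls (u \<otimes>\<^bsub>U\<^esub> U.iv u)"
proof -
  have ju: "j u = \<one>\<^bsub>G\<^esub>" using idem_iff u X by simp
  have e: "u \<otimes>\<^bsub>U\<^esub> U.iv u \<in> idems U" using U.aiv_idem u by simp
  have "rho u (u \<otimes>\<^bsub>U\<^esub> U.iv u)" using u ju U.idem_iv[OF e] e
    by (simp add: rho_def idems_def)
  then show ?thesis using cls_eq u by simp
qed

lemma S0_isg: "inverse_semigroup S0"
proof (rule inverse_semigroupI)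
  show "semigroup_on S0" unfolding semigroup_on_def S0_carrier
    by (auto simp: S0_mult U.assoc cls_c[unfolded S0_carrier])
next
  fix X assume "X \<in> carrier S0"
  then obtain u where u: "u \<in> carrier U" "X = cls u" by (auto simp: S0_carrier)
  show "\<exists>Y\<in>carrier S0. X \<otimes>\<^bsub>S0\<^esub> Y \<otimes>\<^bsub>S0\<^esub> X = X \<and> Y \<otimes>\<^bsub>S0\<^esub> X \<otimes>\<^bsub>S0\<^esub> Y = Y"
    using u U.iv[OF u(1)] by (intro bexI[of _ "cls (U.iv u)"]) (auto simp: S0_mult cls_c)
next
  fix X Y assume X: "X \<in> idems S0" and Y: "Y \<in> idems S0"
  obtain u where u: "u \<in> carrier U" "X = cls u" using X by (auto simp: S0_carrier idems_def)
  obtain v where v: "v \<in> carrier U" "Y = cls v" using Y by (auto simp: S0_carrier idems_def)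
  have X': "X = cls (u \<otimes>\<^bsub>U\<^esub> U.iv u)" using idem_rep u X by simp
  have Y': "Y = cls (v \<otimes>\<^bsub>U\<^esub> U.iv v)" using idem_rep v Y by simp
  show "X \<otimes>\<^bsub>S0\<^esub> Y = Y \<otimes>\<^bsub>S0\<^esub> X"
    unfolding X' Y' using u v U.idem_comm[OF U.aiv_idem U.aiv_idem] by (simp add: S0_mult)
qed


lemma part1: "\<exists>(S :: 'u set monoid) \<pi> \<kappa>.
            \<kappa> \<in> epi S G \<and> is_extension A U S i \<pi> \<and>
            (\<forall>u\<in>carrier U. j u = \<kappa> (\<pi> u))"
proof (intro exI conjI)
  show "kap \<in> epi S0 G"
    unfolding epi_def hom_def
  proof (intro CollectI conjI ballI)
    show "kap \<in> carrier S0 \<rightarrow> carrier G" by (auto simp: S0_carrier kap_cls)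
    fix X Y assume "X \<in> carrier S0" "Y \<in> carrier S0"
    then obtain u v where "u \<in> carrier U" "v \<in> carrier U" "X = cls u" "Y = cls v" by (auto simp: S0_carrier)
    then show "kap (X \<otimes>\<^bsub>S0\<^esub> Y) = kap X \<otimes>\<^bsub>G\<^esub> kap Y" by (simp add: S0_mult kap_cls)
  next
    have "kap ` carrier S0 = j ` carrier U" by (force simp: S0_carrier kap_cls image_image)
    then show "kap ` carrier S0 = carrier G" using jsurj by simp
  qed
  show "is_extension A U S0 i cls"
    unfolding is_extension_def
  proof (intro conjI)
    show "inverse_semigroup A" "inverse_semigroup U" "inverse_semigroup S0" "i \<in> mon A U"
      using isA isU S0_isg imon by auto
    show "cls \<in> epi U S0" unfolding epi_def hom_def
      by (auto simp: cls_c S0_mult S0_carrier)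
    show "idempotent_separating U cls" unfolding idempotent_separating_def
    proof (intro ballI impI)
      fix e f assume e: "e \<in> idems U" and f: "f \<in> idems U" and ef: "cls e = cls f"
      have "rho e f" using ef cls_eq e f by (simp add: idems_def)
      then have "e \<otimes>\<^bsub>U\<^esub> U.iv e = f \<otimes>\<^bsub>U\<^esub> U.iv f" by (simp add: rho_def)
      then show "e = f" using U.idem_iv[OF e] U.idem_iv[OF f] e f by (simp add: idems_def)
    qed
    show "i ` carrier A = {u \<in> carrier U. cls u \<in> idems S0}"
      using kerN idem_iff by auto
  qed
  show "\<forall>u\<in>carrier U. j u = kap (cls u)" by (simp add: kap_cls)
qed

lemma part2:
  fixes S :: "'s monoid" and \<pi> :: "'u \<Rightarrow> 's" and \<kappa> :: "'s \<Rightarrow> 'g"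
  assumes k: "\<kappa> \<in> epi S G" and ex: "is_extension A U S i \<pi>" and jk: "\<forall>u\<in>carrier U. j u = \<kappa> (\<pi> u)"
  shows "E_unitary S \<and> ker_rel S \<kappa> = sigma_rel S"
proof -
  have isS: "inverse_semigroup S" and pe: "\<pi> \<in> epi U S"
    and kerS: "i ` carrier A = {u \<in> carrier U. \<pi> u \<in> idems S}"
    using ex unfolding is_extension_def by auto
  interpret S: invsg S using isS by unfold_locales
  have kc: "\<And>s. s \<in> carrier S \<Longrightarrow> \<kappa> s \<in> carrier G"
    and km: "\<And>s t. s \<in> carrier S \<Longrightarrow> t \<in> carrier S \<Longrightarrow> \<kappa> (s \<otimes>\<^bsub>S\<^esub> t) = \<kappa> s \<otimes>\<^bsub>G\<^esub> \<kappa> t"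
    using k unfolding epi_def hom_def by auto
  have pc: "\<And>u. u \<in> carrier U \<Longrightarrow> \<pi> u \<in> carrier S"
    and pm: "\<And>u v. u \<in> carrier U \<Longrightarrow> v \<in> carrier U \<Longrightarrow> \<pi> (u \<otimes>\<^bsub>U\<^esub> v) = \<pi> u \<otimes>\<^bsub>S\<^esub> \<pi> v"
    and ps: "\<pi> ` carrier U = carrier S"
    using pe unfolding epi_def hom_def by auto
  have Nid: "\<And>u. u \<in> carrier U \<Longrightarrow> \<pi> u \<in> idems S \<longleftrightarrow> j u = \<one>\<^bsub>G\<^esub>"
    using kerS kerN by (metis (mono_tags, lifting) mem_Collect_eq)
  have kid: "\<kappa> e = \<one>\<^bsub>G\<^esub>" if e: "e \<in> idems S" for e
  proof -
    have ec: "e \<in> carrier S" "e \<otimes>\<^bsub>S\<^esub> e = e" using e by (auto simp: idems_def)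
    then have "\<kappa> e \<otimes>\<^bsub>G\<^esub> \<kappa> e = \<kappa> e" by (metis km)
    then show ?thesis using ec kc by simp
  qed
  have EU: "E_unitary S" unfolding E_unitary_def
  proof (intro ballI impI)
    fix e s assume e: "e \<in> idems S" and s: "s \<in> carrier S" and le: "nat_le S e s"
    obtain f where f: "f \<in> idems S" "e = f \<otimes>\<^bsub>S\<^esub> s" using le by (auto simp: nat_le_def)
    have "\<one>\<^bsub>G\<^esub> = \<kappa> f \<otimes>\<^bsub>G\<^esub> \<kappa> s" using kid[OF e] kid[OF f(1)] f km s by (simp add: idems_def)
    then have ks: "\<kappa> s = \<one>\<^bsub>G\<^esub>" using kid[OF f(1)] kc[OF s] by simp
    obtain u where u: "u \<in> carrier U" "s = \<pi> u" using ps s by auto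
    then show "s \<in> idems S" using Nid jk ks by simp
  qed
  have "ker_rel S \<kappa> \<subseteq> sigma_rel S"
  proof
    fix p assume "p \<in> ker_rel S \<kappa>"
    then obtain s t where st: "p = (s, t)" "s \<in> carrier S" "t \<in> carrier S" "\<kappa> s = \<kappa> t"
      by (auto simp: ker_rel_def)
    obtain u where u: "u \<in> carrier U" "s = \<pi> u" using ps st by auto
    obtain v where v: "v \<in> carrier U" "t = \<pi> v" using ps st by auto
    have juv: "j u = j v" using jk u v st by simp
    define x where "x = u \<otimes>\<^bsub>U\<^esub> U.iv v"
    have xc: "x \<in> carrier U" using u v x_def by simp
    have jx: "j x = \<one>\<^bsub>G\<^esub>" using u v juv x_def by simp
    have pxe: "\<pi> x \<in> idems S" using Nid xc jx by simp
    have pxc: "\<pi> x \<in> carrier S" using pxe by (simp add: idems_def)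
    have "\<pi> (U.iv x) = S.iv (\<pi> x)"
      using U.iv[OF xc] pm pc xc by (intro S.iv_unique) (auto simp: pm[symmetric])
    also have "\<dots> = \<pi> x" using S.idem_iv[OF pxe] .
    finally have pix: "\<pi> (U.iv x) = \<pi> x" .
    have pxx: "\<pi> (x \<otimes>\<^bsub>U\<^esub> U.iv x) = \<pi> x"
      using pm xc pix pxe by (simp add: idems_def)
    have c: "U.iv u \<otimes>\<^bsub>U\<^esub> u \<otimes>\<^bsub>U\<^esub> (U.iv v \<otimes>\<^bsub>U\<^esub> v) = U.iv v \<otimes>\<^bsub>U\<^esub> v \<otimes>\<^bsub>U\<^esub> (U.iv u \<otimes>\<^bsub>U\<^esub> u)"
      using U.idem_comm U.iva_idem u v by blast
    have "x \<otimes>\<^bsub>U\<^esub> U.iv x \<otimes>\<^bsub>U\<^esub> u = u \<otimes>\<^bsub>U\<^esub> (U.iv v \<otimes>\<^bsub>U\<^esub> v \<otimes>\<^bsub>U\<^esub> (U.iv u \<otimes>\<^bsub>U\<^esub> u))"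
      using u v by (simp add: x_def U.iv_mult U.iv_iv U.assoc)
    also have "\<dots> = u \<otimes>\<^bsub>U\<^esub> (U.iv u \<otimes>\<^bsub>U\<^esub> u \<otimes>\<^bsub>U\<^esub> (U.iv v \<otimes>\<^bsub>U\<^esub> v))" using c by simp
    also have "\<dots> = (u \<otimes>\<^bsub>U\<^esub> U.iv u \<otimes>\<^bsub>U\<^esub> u) \<otimes>\<^bsub>U\<^esub> U.iv v \<otimes>\<^bsub>U\<^esub> v" using u v by (simp add: U.assoc)
    also have "\<dots> = x \<otimes>\<^bsub>U\<^esub> v" using U.iv[OF u(1)] u v by (simp add: x_def U.assoc)
    finally have xv: "x \<otimes>\<^bsub>U\<^esub> U.iv x \<otimes>\<^bsub>U\<^esub> u = x \<otimes>\<^bsub>U\<^esub> v" .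
    have "\<pi> x \<otimes>\<^bsub>S\<^esub> s = \<pi> x \<otimes>\<^bsub>S\<^esub> t"
      using xv u v xc pm pxx by (metis U.closed U.iv_c)
    then show "p \<in> sigma_rel S" using st pxe by (auto simp: sigma_rel_def)
  qed
  moreover have "sigma_rel S \<subseteq> ker_rel S \<kappa>"
  proof
    fix p assume "p \<in> sigma_rel S"
    then obtain s t e where st: "p = (s, t)" "s \<in> carrier S" "t \<in> carrier S" "e \<in> idems S"
      "e \<otimes>\<^bsub>S\<^esub> s = e \<otimes>\<^bsub>S\<^esub> t" by (auto simp: sigma_rel_def)
    have "\<kappa> e \<otimes>\<^bsub>G\<^esub> \<kappa> s = \<kappa> e \<otimes>\<^bsub>G\<^esub> \<kappa> t" using st km by (metis idems_def mem_Collect_eq)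
    then have "\<kappa> s = \<kappa> t" using kid[OF st(4)] kc st by simp
    then show "p \<in> ker_rel S \<kappa>" using st by (simp add: ker_rel_def)
  qed
  ultimately show ?thesis using EU by blast
qed

end

theorem proposition4p5:
  fixes A :: "'a monoid" and U :: "'u monoid" and G :: "'g monoid"
    and i :: "'a \<Rightarrow> 'u" and j :: "'u \<Rightarrow> 'g"
  assumes "semilattice_of_groups A"
    and "group_extension A U G i j"
  shows "(\<exists>(S :: 'u set monoid) \<pi> \<kappa>.
            \<kappa> \<in> epi S G \<and> is_extension A U S i \<pi> \<and>
            (\<forall>u\<in>carrier U. j u = \<kappa> (\<pi> u)))
       \<and> (\<forall>(S :: 's monoid) \<pi> \<kappa>.
            \<kappa> \<in> epi S G \<and> is_extension A U S i \<pi> \<and>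
            (\<forall>u\<in>carrier U. j u = \<kappa> (\<pi> u))
            \<longrightarrow> E_unitary S \<and> ker_rel S \<kappa> = sigma_rel S)"
proof -
  interpret ext A U G i j using assms by unfold_locales
  show ?thesis using part1 part2 by blast
qed

end
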